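(* Let $P_1,\dots,P_m$ be Hermitian $n$-qubit Pauli operators and $U_1,\dots,U_{m+1}$ be $n$-qubit Clifford unitaries such that, with $E_\beta=U_{m+1}\frac{I+\beta_mP_m}{2}U_m\cdots U_2\frac{I+\beta_1P_1}{2}U_1$ for $\beta\in\{-1,1\}^m$, one has $E_\beta^2=E_\beta$ for all $\beta$ and $\sum_\beta E_\beta^\dagger E_\beta=I$; let $\hat P_1,\dots,\hat P_m$ be pairwise commuting Hermitian Pauli operators with $E_\beta=\prod_{i=1}^m\frac{I+\beta_i\hat P_i}{2}$ for all $\beta$ (these exist). Then for every $\beta\in\{-1,1\}^m$ and all Pauli operators $Q_1,\dots,Q_{2m+1}$, the operator $$E'=Q_{2m+1}U_{m+1}Q_{2m}\frac{I+\beta_mP_m}{2}Q_{2m-1}U_m\cdots Q_3U_2Q_2\frac{I+\beta_1P_1}{2}Q_1U_1$$ satisfies $$E'=Q\cdot\frac{I+(-1)^{\gamma_1}\hat P_1}{2}\cdots\frac{I+(-1)^{\gamma_m}\hat P_m}{2}$$ for some Pauli operator $Q$ and some $\gamma\in\{0,1\}^m$.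
   Context: An $n$-qubit Pauli operator is $c\,\sigma_1\otimes\cdots\otimes\sigma_n$ with $c\in\{\pm1,\pm i\}$ and $\sigma_j\in\{I,X,Y,Z\}$; it is Hermitian iff $c\in\{\pm1\}$. A unitary $U$ is Clifford if $UPU^\dagger$ is a Pauli operator for every Pauli operator $P$. (In the paper, $E'$ is the Kraus operator of an execution path of a loop body in which Pauli faults $Q_j$ are inserted.) *)

theory Defs
  imports "Jordan_Normal_Form.Schur_Decomposition"
begin

datatype pauli1 = PI | PX | PY | PZ

definition pauli1_mat :: "pauli1 \<Rightarrow> complex mat" where
  "pauli1_mat s = (case s of
      PI \<Rightarrow> mat_of_rows_list 2 [[1, 0], [0, 1]]
    | PX \<Rightarrow> mat_of_rows_list 2 [[0, 1], [1, 0]]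
    | PY \<Rightarrow> mat_of_rows_list 2 [[0, -\<i>], [\<i>, 0]]
    | PZ \<Rightarrow> mat_of_rows_list 2 [[1, 0], [0, -1]])"

definition kron :: "complex mat \<Rightarrow> complex mat \<Rightarrow> complex mat" where
  "kron A B = mat (dim_row A * dim_row B) (dim_col A * dim_col B)
     (\<lambda>(i, j). A $$ (i div dim_row B, j div dim_col B) * B $$ (i mod dim_row B, j mod dim_col B))"

fun kron_list :: "pauli1 list \<Rightarrow> complex mat" where
  "kron_list [] = 1\<^sub>m 1"
| "kron_list (s # ss) = kron (pauli1_mat s) (kron_list ss)"

definition pauli_op :: "nat \<Rightarrow> complex mat \<Rightarrow> bool" where
  "pauli_op n P \<longleftrightarrow> (\<exists>c ss. c \<in> {1, -1, \<i>, -\<i>} \<and> length ss = n \<and> P = c \<cdot>\<^sub>m kron_list ss)"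

definition herm_pauli_op :: "nat \<Rightarrow> complex mat \<Rightarrow> bool" where
  "herm_pauli_op n P \<longleftrightarrow> (\<exists>c ss. c \<in> {1, -1} \<and> length ss = n \<and> P = c \<cdot>\<^sub>m kron_list ss)"

definition unitary_mat :: "nat \<Rightarrow> complex mat \<Rightarrow> bool" where
  "unitary_mat N U \<longleftrightarrow> U \<in> carrier_mat N N \<and> U * mat_adjoint U = 1\<^sub>m N \<and> mat_adjoint U * U = 1\<^sub>m N"

definition clifford :: "nat \<Rightarrow> complex mat \<Rightarrow> bool" where
  "clifford n U \<longleftrightarrow> unitary_mat (2 ^ n) U \<and>
     (\<forall>P. pauli_op n P \<longrightarrow> pauli_op n (U * P * mat_adjoint U))"

definition proj :: "nat \<Rightarrow> complex \<Rightarrow> complex mat \<Rightarrow> complex mat" where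
  "proj N b P = (1 / 2 :: complex) \<cdot>\<^sub>m (1\<^sub>m N + b \<cdot>\<^sub>m P)"

definition sign_vecs :: "nat \<Rightarrow> (nat \<Rightarrow> int) set" where
  "sign_vecs m = {\<beta>. (\<forall>i \<in> {1..m}. \<beta> i \<in> {-1, 1}) \<and> (\<forall>i. i \<notin> {1..m} \<longrightarrow> \<beta> i = 1)}"

text \<open>E_k = U_(k+1) (I+beta_k P_k)/2 U_k ... U_2 (I+beta_1 P_1)/2 U_1; E_beta = Epath N U P beta m.\<close>
fun Epath :: "nat \<Rightarrow> (nat \<Rightarrow> complex mat) \<Rightarrow> (nat \<Rightarrow> complex mat) \<Rightarrow> (nat \<Rightarrow> int) \<Rightarrow> nat \<Rightarrow> complex mat" where
  "Epath N U P \<beta> 0 = U 1"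
| "Epath N U P \<beta> (Suc k) = U (k + 2) * proj N (of_int (\<beta> (Suc k))) (P (Suc k)) * Epath N U P \<beta> k"

text \<open>Faulty path: F_0 = Q_1 U_1,
  F_(k+1) = Q_(2k+3) U_(k+2) Q_(2k+2) (I+beta_(k+1) P_(k+1))/2 F_k; so
  F_m = Q_(2m+1) U_(m+1) Q_(2m) (I+beta_m P_m)/2 Q_(2m-1) U_m ... Q_2 (I+beta_1 P_1)/2 Q_1 U_1.\<close>
fun Efault :: "nat \<Rightarrow> (nat \<Rightarrow> complex mat) \<Rightarrow> (nat \<Rightarrow> complex mat) \<Rightarrow> (nat \<Rightarrow> complex mat) \<Rightarrow> (nat \<Rightarrow> int) \<Rightarrow> nat \<Rightarrow> complex mat" where
  "Efault N U P Q \<beta> 0 = Q 1 * U 1"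
| "Efault N U P Q \<beta> (Suc k) =
     Q (2 * k + 3) * U (k + 2) * Q (2 * k + 2) * proj N (of_int (\<beta> (Suc k))) (P (Suc k)) * Efault N U P Q \<beta> k"

fun proj_prod :: "nat \<Rightarrow> (nat \<Rightarrow> complex) \<Rightarrow> (nat \<Rightarrow> complex mat) \<Rightarrow> nat \<Rightarrow> complex mat" where
  "proj_prod N c Ph 0 = 1\<^sub>m N"
| "proj_prod N c Ph (Suc k) = proj_prod N c Ph k * proj N (c (Suc k)) (Ph (Suc k))"

definition mat_sum :: "nat \<Rightarrow> 'b set \<Rightarrow> ('b \<Rightarrow> complex mat) \<Rightarrow> complex mat" where
  "mat_sum N S f = mat N N (\<lambda>ij. \<Sum>x\<in>S. f x $$ ij)"

end

theory Submission imports Defs begin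

lemma sum_split_mult: "(\<Sum>k<(a::nat)*b. f k) = (\<Sum>x<a. \<Sum>y<b. f (x*b+y) :: 'a::comm_monoid_add)"
proof -
  have "(\<Sum>k<a*b. f k) = (\<Sum>x<a. sum f {x*b..<x*b+b})" by (rule sum.nat_group[symmetric])
  also have "\<dots> = (\<Sum>x<a. \<Sum>y<b. f (x*b+y))"
  proof (rule sum.cong[OF refl])
    fix x show "sum f {x*b..<x*b+b} = (\<Sum>y<b. f (x*b+y))"
      using sum.shift_bounds_nat_ivl[of f 0 "x*b" b] by (simp add: atLeast0LessThan add.commute)
  qed
  finally show ?thesis .
qed


lemma kron_dims[simp]: "dim_row (kron A B) = dim_row A * dim_row B" "dim_col (kron A B) = dim_col A * dim_col B"
  by (simp_all add: kron_def)

lemma kron_carrier: "A \<in> carrier_mat r1 c1 \<Longrightarrow> B \<in> carrier_mat r2 c2 \<Longrightarrow> kron A B \<in> carrier_mat (r1*r2) (c1*c2)"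
  by (rule carrier_matI) (simp_all add: carrier_matD)

lemma kron_index: "i < dim_row A * dim_row B \<Longrightarrow> j < dim_col A * dim_col B \<Longrightarrow>
  kron A B $$ (i,j) = A $$ (i div dim_row B, j div dim_col B) * B $$ (i mod dim_row B, j mod dim_col B)"
  by (simp add: kron_def)

lemma mult_index_sum: "i < dim_row X \<Longrightarrow> j < dim_col Y \<Longrightarrow> dim_col X = dim_row Y \<Longrightarrow>
  (X * Y) $$ (i,j) = (\<Sum>k<dim_col X. X $$ (i,k) * Y $$ (k,j))"
  by (simp add: scalar_prod_def atLeast0LessThan)

lemma kron_mult:
  assumes A: "A \<in> carrier_mat ra ca" and B: "B \<in> carrier_mat rb cb"
    and C: "C \<in> carrier_mat ca cc" and D: "D \<in> carrier_mat cb cd"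
    and pos: "rb > 0" "cb > 0" "cd > 0"
  shows "kron A B * kron C D = kron (A*C) (B*D)"
proof (rule eq_matI)
  show "dim_row (kron A B * kron C D) = dim_row (kron (A * C) (B * D))"
    using A B C D by simp
  show "dim_col (kron A B * kron C D) = dim_col (kron (A * C) (B * D))"
    using A B C D by simp
  fix i j assume i: "i < dim_row (kron (A * C) (B * D))" and j: "j < dim_col (kron (A * C) (B * D))"
  have i': "i < ra * rb" and j': "j < cc * cd" using i j A B C D by auto
  have idiv: "i div rb < ra" using i' by (simp add: less_mult_imp_div_less)
  have jdiv: "j div cd < cc" using j' by (simp add: less_mult_imp_div_less)
  have imod: "i mod rb < rb" using pos by simp
  have jmod: "j mod cd < cd" using pos by simp
  have dr: "dim_row A = ra" "dim_col A = ca" "dim_row B = rb" "dim_col B = cb"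
     "dim_row C = ca" "dim_col C = cc" "dim_row D = cb" "dim_col D = cd" using A B C D by auto
  have "(kron A B * kron C D) $$ (i, j) = (\<Sum>k<ca*cb. kron A B $$ (i,k) * kron C D $$ (k,j))"
    using i' j' by (subst mult_index_sum) (simp_all add: dr)
  also have "\<dots> = (\<Sum>k<ca*cb. A $$ (i div rb, k div cb) * B $$ (i mod rb, k mod cb) * (C $$ (k div cb, j div cd) * D $$ (k mod cb, j mod cd)))"
    by (rule sum.cong[OF refl]) (use i' j' in \<open>simp add: kron_index dr\<close>)
  also have "\<dots> = (\<Sum>x<ca. \<Sum>y<cb. A $$ (i div rb, x) * B $$ (i mod rb, y) * (C $$ (x, j div cd) * D $$ (y, j mod cd)))"
  proof -
    have dm: "(x*cb+y) div cb = x" "(x*cb+y) mod cb = y" if "y < cb" for x y using that pos by auto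
    show ?thesis unfolding sum_split_mult by (intro sum.cong refl) (simp add: dm)
  qed
  also have "\<dots> = (\<Sum>x<ca. A $$ (i div rb, x) * C $$ (x, j div cd)) * (\<Sum>y<cb. B $$ (i mod rb, y) * D $$ (y, j mod cd))"
    by (subst sum_product) (rule sum.cong[OF refl], rule sum.cong[OF refl], simp only: mult_ac)
  also have "\<dots> = (A*C) $$ (i div rb, j div cd) * (B*D) $$ (i mod rb, j mod cd)"
    using idiv jdiv imod jmod by (subst (1 2) mult_index_sum) (simp_all add: dr)
  also have "\<dots> = kron (A*C) (B*D) $$ (i, j)"
    using i' j' by (subst kron_index) (simp_all add: dr)
  finally show "(kron A B * kron C D) $$ (i, j) = kron (A*C) (B*D) $$ (i, j)" .
qed
lemma pauli1_carrier: "pauli1_mat s \<in> carrier_mat 2 2"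
  by (cases s) (auto simp: pauli1_mat_def mat_of_rows_list_def)

lemma chain:
  fixes Q3 Uk Q2 Pr Q0 E Ad Pr' :: "'a::semiring_1 mat"
  assumes C: "Q3 \<in> carrier_mat N N" "Uk \<in> carrier_mat N N" "Q2 \<in> carrier_mat N N" "Pr \<in> carrier_mat N N"
    "Q0 \<in> carrier_mat N N" "E \<in> carrier_mat N N" "Ad \<in> carrier_mat N N" "Pr' \<in> carrier_mat N N"
    and c: "Pr * Q0 = Q0 * Pr'" and u: "Ad * Uk = 1\<^sub>m N"
  shows "Q3 * Uk * Q2 * Pr * (Q0 * E) = Q3 * (Uk * (Q2*Q0) * Ad) * (Uk * Pr' * E)"
proof -
  define W where "W = Uk * (Pr' * E)"
  have PE: "Pr' * E \<in> carrier_mat N N" using C(8,6) by (rule mult_carrier_mat)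
  have WC: "W \<in> carrier_mat N N" unfolding W_def using C(2) PE by (rule mult_carrier_mat)
  have AW: "Ad * W = Pr' * E"
  proof -
    have "Ad * W = Ad * Uk * (Pr' * E)" unfolding W_def using assoc_mult_mat[OF C(7) C(2) PE] by simp
    also have "\<dots> = Pr' * E" using u left_mult_one_mat[OF PE] by simp
    finally show ?thesis .
  qed
  have QE: "Q0 * E \<in> carrier_mat N N" using C(5,6) by (rule mult_carrier_mat)
  have l: "Pr * (Q0 * E) = Q0 * (Ad * W)"
  proof -
    have "Pr * (Q0 * E) = Pr * Q0 * E" using assoc_mult_mat[OF C(4) C(5) C(6)] by simp
    also have "\<dots> = Q0 * Pr' * E" using c by simp
    also have "\<dots> = Q0 * (Pr' * E)" using assoc_mult_mat[OF C(5) C(8) C(6)] .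
    finally show ?thesis using AW by simp
  qed
  have V: "Q0 * (Ad * W) \<in> carrier_mat N N" using C(5) C(7) WC by simp
  have c31: "Q3 * Uk \<in> carrier_mat N N" using C(1,2) by (rule mult_carrier_mat)
  have c32: "Q3 * Uk * Q2 \<in> carrier_mat N N" using c31 C(3) by (rule mult_carrier_mat)
  have "Q3 * Uk * Q2 * Pr * (Q0 * E) = Q3 * Uk * Q2 * (Pr * (Q0 * E))"
    using assoc_mult_mat[OF c32 C(4) QE] .
  also have "\<dots> = Q3 * Uk * Q2 * (Q0 * (Ad * W))" using l by simp
  also have "\<dots> = Q3 * Uk * (Q2 * (Q0 * (Ad * W)))" using assoc_mult_mat[OF c31 C(3) V] .
  also have "\<dots> = Q3 * (Uk * (Q2 * (Q0 * (Ad * W))))"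
    using assoc_mult_mat[OF C(1) C(2) mult_carrier_mat[OF C(3) V]] .
  finally have L: "Q3 * Uk * Q2 * Pr * (Q0 * E) = Q3 * (Uk * (Q2 * (Q0 * (Ad * W))))" .
  have QQ: "Q2 * Q0 \<in> carrier_mat N N" using C(3,5) by (rule mult_carrier_mat)
  have UQ: "Uk * (Q2 * Q0) \<in> carrier_mat N N" using C(2) QQ by (rule mult_carrier_mat)
  have AWC: "Ad * W \<in> carrier_mat N N" using C(7) WC by (rule mult_carrier_mat)
  have "Q3 * (Uk * (Q2*Q0) * Ad) * (Uk * Pr' * E) = Q3 * (Uk * (Q2*Q0) * Ad) * W"
    unfolding W_def using assoc_mult_mat[OF C(2) C(8) C(6)] by simp
  also have "\<dots> = Q3 * ((Uk * (Q2*Q0) * Ad) * W)"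
    using assoc_mult_mat[OF C(1) mult_carrier_mat[OF UQ C(7)] WC] .
  also have "(Uk * (Q2*Q0) * Ad) * W = Uk * (Q2*Q0) * (Ad * W)"
    using assoc_mult_mat[OF UQ C(7) WC] .
  also have "\<dots> = Uk * ((Q2*Q0) * (Ad * W))" using assoc_mult_mat[OF C(2) QQ AWC] .
  also have "(Q2*Q0) * (Ad * W) = Q2 * (Q0 * (Ad * W))" using assoc_mult_mat[OF C(3) C(5) AWC] .
  finally show ?thesis using L by simp
qed

lemma kron_smult: "kron (a \<cdot>\<^sub>m A) (b \<cdot>\<^sub>m B) = (a*b) \<cdot>\<^sub>m kron A B"
proof (rule eq_matI)
  fix i j assume i: "i < dim_row ((a*b) \<cdot>\<^sub>m kron A B)" and j: "j < dim_col ((a*b) \<cdot>\<^sub>m kron A B)"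
  then have i': "i < dim_row A * dim_row B" and j': "j < dim_col A * dim_col B" by simp_all
  have rb: "dim_row B > 0" using i' by (cases "dim_row B = 0") simp_all
  have cb: "dim_col B > 0" using j' by (cases "dim_col B = 0") simp_all
  have d1: "i div dim_row B < dim_row A" using less_mult_imp_div_less[OF i'] .
  have d2: "j div dim_col B < dim_col A" using less_mult_imp_div_less[OF j'] .
  have m1: "i mod dim_row B < dim_row B" using rb by simp
  have m2: "j mod dim_col B < dim_col B" using cb by simp
  have "kron (a \<cdot>\<^sub>m A) (b \<cdot>\<^sub>m B) $$ (i, j) = (a \<cdot>\<^sub>m A) $$ (i div dim_row B, j div dim_col B) * (b \<cdot>\<^sub>m B) $$ (i mod dim_row B, j mod dim_col B)"
    using i' j' by (subst kron_index) simp_all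
  also have "\<dots> = (a * b) * (A $$ (i div dim_row B, j div dim_col B) * B $$ (i mod dim_row B, j mod dim_col B))"
    using d1 d2 m1 m2 by (simp add: mult_ac)
  also have "\<dots> = ((a*b) \<cdot>\<^sub>m kron A B) $$ (i, j)"
    using i' j' by (simp add: kron_index)
  finally show "kron (a \<cdot>\<^sub>m A) (b \<cdot>\<^sub>m B) $$ (i, j) = ((a*b) \<cdot>\<^sub>m kron A B) $$ (i, j)" .
qed simp_all

lemma m2_mult: "mat_of_rows_list 2 [[a,b],[c,d]] * mat_of_rows_list 2 [[e,f],[g,h]] =
  mat_of_rows_list 2 [[a*e+b*g, a*f+b*h],[c*e+d*g, c*f+d*h::complex]]"
proof (rule eq_matI)
  fix i j assume "i < dim_row (mat_of_rows_list 2 [[a*e+b*g, a*f+b*h],[c*e+d*g, c*f+d*h::complex]])"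
    "j < dim_col (mat_of_rows_list 2 [[a*e+b*g, a*f+b*h],[c*e+d*g, c*f+d*h::complex]])"
  then have "i = 0 \<or> i = 1" "j = 0 \<or> j = 1" by (auto simp: mat_of_rows_list_def)
  then show "(mat_of_rows_list 2 [[a,b],[c,d]] * mat_of_rows_list 2 [[e,f],[g,h]]) $$ (i, j) =
    mat_of_rows_list 2 [[a*e+b*g, a*f+b*h],[c*e+d*g, c*f+d*h::complex]] $$ (i, j)"
    by (auto simp: mat_of_rows_list_def scalar_prod_def row_def col_def numeral_2_eq_2)
qed (auto simp: mat_of_rows_list_def)

lemma m2_smult: "k \<cdot>\<^sub>m mat_of_rows_list 2 [[a,b],[c,d]] = mat_of_rows_list 2 [[k*a,k*b],[k*c,k*d::complex]]"
proof (rule eq_matI)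
  fix i j assume "i < dim_row (mat_of_rows_list 2 [[k*a,k*b],[k*c,k*d::complex]])"
    "j < dim_col (mat_of_rows_list 2 [[k*a,k*b],[k*c,k*d::complex]])"
  then have "i = 0 \<or> i = 1" "j = 0 \<or> j = 1" by (auto simp: mat_of_rows_list_def)
  then show "(k \<cdot>\<^sub>m mat_of_rows_list 2 [[a,b],[c,d]]) $$ (i, j) = mat_of_rows_list 2 [[k*a,k*b],[k*c,k*d::complex]] $$ (i, j)"
    by (auto simp: mat_of_rows_list_def)
qed (auto simp: mat_of_rows_list_def)

fun pm :: "pauli1 \<Rightarrow> pauli1 \<Rightarrow> pauli1" where
  "pm PI b = b" | "pm a PI = a"
| "pm PX PX = PI" | "pm PY PY = PI" | "pm PZ PZ = PI"
| "pm PX PY = PZ" | "pm PY PX = PZ"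
| "pm PY PZ = PX" | "pm PZ PY = PX"
| "pm PZ PX = PY" | "pm PX PZ = PY"

fun ph :: "pauli1 \<Rightarrow> pauli1 \<Rightarrow> complex" where
  "ph PI b = 1" | "ph a PI = 1"
| "ph PX PX = 1" | "ph PY PY = 1" | "ph PZ PZ = 1"
| "ph PX PY = \<i>" | "ph PY PX = -\<i>"
| "ph PY PZ = \<i>" | "ph PZ PY = -\<i>"
| "ph PZ PX = \<i>" | "ph PX PZ = -\<i>"

lemma ph_in: "ph a b \<in> {1,-1,\<i>,-\<i>}"
  by (cases a; cases b) auto

lemma phase_mult: "c \<in> {1,-1,\<i>,-\<i>} \<Longrightarrow> d \<in> {1,-1,\<i>,-\<i>} \<Longrightarrow> c * d \<in> {1,-1,\<i>,-\<i>::complex}"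
  by auto

lemma pauli1_mult: "pauli1_mat a * pauli1_mat b = ph a b \<cdot>\<^sub>m pauli1_mat (pm a b)"
  by (cases a; cases b) (simp_all add: pauli1_mat_def m2_mult m2_smult)

lemma pauli1_comm: "\<exists>s\<in>{1,-1::int}. pauli1_mat a * pauli1_mat b = of_int s \<cdot>\<^sub>m (pauli1_mat b * pauli1_mat a)"
  by (cases a; cases b) (simp_all add: pauli1_mat_def m2_mult m2_smult)

lemma smult_smult_m: "a \<cdot>\<^sub>m (b \<cdot>\<^sub>m A) = (a * b :: 'a::semigroup_mult) \<cdot>\<^sub>m A"
  by (rule eq_matI) (auto simp: mult.assoc)

lemma one_smult_m: "(1::'a::monoid_mult) \<cdot>\<^sub>m A = A"
  by (rule eq_matI) auto

lemma kron_list_carrier: "kron_list ss \<in> carrier_mat (2^length ss) (2^length ss)"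
proof (induction ss)
  case Nil then show ?case by simp
next
  case (Cons a ss) then show ?case using kron_carrier[OF pauli1_carrier Cons.IH] by simp
qed

lemma kron_list_comm: "length ss = length ts \<Longrightarrow>
  \<exists>s\<in>{1,-1::int}. kron_list ss * kron_list ts = of_int s \<cdot>\<^sub>m (kron_list ts * kron_list ss)"
proof (induction ss arbitrary: ts)
  case Nil then show ?case by (intro bexI[of _ 1]) (auto simp: one_smult_m)
next
  case (Cons a ss)
  then obtain b ts' where ts: "ts = b # ts'" and len: "length ss = length ts'" by (cases ts) auto
  from Cons.IH[OF len] obtain s2 where s2: "s2 \<in> {1,-1::int}"
    and e2: "kron_list ss * kron_list ts' = of_int s2 \<cdot>\<^sub>m (kron_list ts' * kron_list ss)" by blast
  from pauli1_comm obtain s1 where s1: "s1 \<in> {1,-1::int}"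
    and e1: "pauli1_mat a * pauli1_mat b = of_int s1 \<cdot>\<^sub>m (pauli1_mat b * pauli1_mat a)" by blast
  have K: "kron_list ss \<in> carrier_mat (2^length ss) (2^length ss)"
    "kron_list ts' \<in> carrier_mat (2^length ss) (2^length ss)"
    using kron_list_carrier len by metis+
  have "kron_list (a#ss) * kron_list ts = kron (pauli1_mat a * pauli1_mat b) (kron_list ss * kron_list ts')"
    using ts by (simp add: kron_mult[OF pauli1_carrier K(1) pauli1_carrier K(2)])
  also have "\<dots> = of_int (s1 * s2) \<cdot>\<^sub>m kron (pauli1_mat b * pauli1_mat a) (kron_list ts' * kron_list ss)"
    by (simp add: e1 e2 kron_smult)
  also have "\<dots> = of_int (s1 * s2) \<cdot>\<^sub>m (kron_list ts * kron_list (a#ss))"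
    using ts by (simp add: kron_mult[OF pauli1_carrier K(2) pauli1_carrier K(1)])
  finally show ?case using s1 s2 by (intro bexI[of _ "s1*s2"]) auto
qed

lemma kron_list_mult: "length ss = length ts \<Longrightarrow>
  \<exists>c\<in>{1,-1,\<i>,-\<i>}. \<exists>us. length us = length ss \<and> kron_list ss * kron_list ts = c \<cdot>\<^sub>m kron_list us"
proof (induction ss arbitrary: ts)
  case Nil then show ?case by (intro bexI[of _ 1] exI[of _ "[]"]) (auto simp: one_smult_m)
next
  case (Cons a ss)
  then obtain b ts' where ts: "ts = b # ts'" and len: "length ss = length ts'" by (cases ts) auto
  from Cons.IH[OF len] obtain c us where c: "c \<in> {1,-1,\<i>,-\<i>}" and lus: "length us = length ss"
    and e2: "kron_list ss * kron_list ts' = c \<cdot>\<^sub>m kron_list us" by blast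
  have K: "kron_list ss \<in> carrier_mat (2^length ss) (2^length ss)"
    "kron_list ts' \<in> carrier_mat (2^length ss) (2^length ss)"
    using kron_list_carrier len by metis+
  have "kron_list (a#ss) * kron_list ts = kron (pauli1_mat a * pauli1_mat b) (kron_list ss * kron_list ts')"
    using ts by (simp add: kron_mult[OF pauli1_carrier K(1) pauli1_carrier K(2)])
  also have "\<dots> = (ph a b * c) \<cdot>\<^sub>m kron_list (pm a b # us)"
    by (simp add: pauli1_mult e2 kron_smult)
  finally show ?case using phase_mult[OF ph_in c] lus
    by (intro bexI[of _ "ph a b * c"] exI[of _ "pm a b # us"]) auto
qed

lemma pauli_carrier: "pauli_op n P \<Longrightarrow> P \<in> carrier_mat (2^n) (2^n)"
  unfolding pauli_op_def using kron_list_carrier by (metis smult_carrier_mat)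

lemma herm_pauli: "herm_pauli_op n P \<Longrightarrow> pauli_op n P"
  unfolding pauli_op_def herm_pauli_op_def by blast

lemma pauli_mult: assumes "pauli_op n A" "pauli_op n B" shows "pauli_op n (A * B)"
proof -
  obtain c ss where c: "c \<in> {1,-1,\<i>,-\<i>}" "length ss = n" "A = c \<cdot>\<^sub>m kron_list ss"
    using assms(1) unfolding pauli_op_def by blast
  obtain d ts where d: "d \<in> {1,-1,\<i>,-\<i>}" "length ts = n" "B = d \<cdot>\<^sub>m kron_list ts"
    using assms(2) unfolding pauli_op_def by blast
  have "length ss = length ts" using c d by simp
  from kron_list_mult[OF this] obtain e us where e: "e \<in> {1,-1,\<i>,-\<i>}" "length us = length ss"
     "kron_list ss * kron_list ts = e \<cdot>\<^sub>m kron_list us" by blast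
  have K: "kron_list ss \<in> carrier_mat (2^n) (2^n)" "kron_list ts \<in> carrier_mat (2^n) (2^n)"
    using kron_list_carrier c d by metis+
  have "A * B = (c * (d * e)) \<cdot>\<^sub>m kron_list us"
    using K by (simp add: c d e mult_smult_assoc_mat[of _ "2^n" "2^n"] mult_smult_distrib[of _ "2^n" "2^n"] smult_smult_m mult_ac)
  moreover have "c * (d * e) \<in> {1,-1,\<i>,-\<i>}" using c d e phase_mult by blast
  ultimately show ?thesis unfolding pauli_op_def using e c by auto
qed

lemma herm_pauli_comm: assumes "herm_pauli_op n P" "pauli_op n Q"
  shows "\<exists>s\<in>{1,-1::int}. P * Q = of_int s \<cdot>\<^sub>m (Q * P)"
proof -
  obtain c ss where c: "c \<in> {1,-1}" "length ss = n" "P = c \<cdot>\<^sub>m kron_list ss"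
    using assms(1) unfolding herm_pauli_op_def by blast
  obtain d ts where d: "d \<in> {1,-1,\<i>,-\<i>}" "length ts = n" "Q = d \<cdot>\<^sub>m kron_list ts"
    using assms(2) unfolding pauli_op_def by blast
  have "length ss = length ts" using c d by simp
  from kron_list_comm[OF this] obtain s where s: "s \<in> {1,-1::int}"
    "kron_list ss * kron_list ts = of_int s \<cdot>\<^sub>m (kron_list ts * kron_list ss)" by blast
  have K: "kron_list ss \<in> carrier_mat (2^n) (2^n)" "kron_list ts \<in> carrier_mat (2^n) (2^n)"
    using kron_list_carrier c d by metis+
  have "P * Q = (c * d * of_int s) \<cdot>\<^sub>m (kron_list ts * kron_list ss)"
    using K by (simp add: c d s mult_smult_assoc_mat[of _ "2^n" "2^n"] mult_smult_distrib[of _ "2^n" "2^n"] smult_smult_m mult_ac)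
  also have "\<dots> = of_int s \<cdot>\<^sub>m (Q * P)"
    using K by (simp add: c d s mult_smult_assoc_mat[of _ "2^n" "2^n"] mult_smult_distrib[of _ "2^n" "2^n"] smult_smult_m mult_ac)
  finally show ?thesis using s by blast
qed

lemma proj_carrier: "P \<in> carrier_mat N N \<Longrightarrow> proj N b P \<in> carrier_mat N N"
  unfolding proj_def by simp

lemma proj_comm:
  assumes P: "P \<in> carrier_mat N N" and Q: "Q \<in> carrier_mat N N" and PQ: "P * Q = s \<cdot>\<^sub>m (Q * P)"
  shows "proj N b P * Q = Q * proj N (b * s) P"
proof -
  have "proj N b P * Q = (1/2) \<cdot>\<^sub>m ((1\<^sub>m N + b \<cdot>\<^sub>m P) * Q)"
    unfolding proj_def using P Q by (simp add: mult_smult_assoc_mat[of _ N N])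
  also have "(1\<^sub>m N + b \<cdot>\<^sub>m P) * Q = Q + (b*s) \<cdot>\<^sub>m (Q * P)"
    using P Q by (simp add: add_mult_distrib_mat[of _ N N] mult_smult_assoc_mat[of _ N N] PQ smult_smult_m)
  also have "Q + (b*s) \<cdot>\<^sub>m (Q * P) = Q * (1\<^sub>m N + (b * s) \<cdot>\<^sub>m P)"
  proof -
    have "Q * (1\<^sub>m N + (b * s) \<cdot>\<^sub>m P) = Q * 1\<^sub>m N + Q * ((b * s) \<cdot>\<^sub>m P)"
      by (rule mult_add_distrib_mat) (use P Q in auto)
    then show ?thesis using P Q by (simp add: mult_smult_distrib[of _ N N])
  qed
  also have "(1/2) \<cdot>\<^sub>m (Q * (1\<^sub>m N + (b * s) \<cdot>\<^sub>m P)) = Q * proj N (b * s) P"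
    unfolding proj_def by (rule mult_smult_distrib[symmetric]) (use P Q in auto)
  finally show ?thesis .
qed

lemma Epath_cong: "(\<forall>i\<in>{1..k}. \<beta> i = \<beta>' i) \<Longrightarrow> Epath N U P \<beta> k = Epath N U P \<beta>' k"
  by (induction k) auto

lemma Epath_carrier: "(\<forall>i\<in>{1..k+1}. U i \<in> carrier_mat N N) \<Longrightarrow> (\<forall>i\<in>{1..k}. P i \<in> carrier_mat N N)
  \<Longrightarrow> Epath N U P \<beta> k \<in> carrier_mat N N"
proof (induction k)
  case 0 then show ?case by simp
next
  case (Suc k)
  have "U (k+2) \<in> carrier_mat N N" "P (Suc k) \<in> carrier_mat N N" using Suc.prems by auto
  moreover have "Epath N U P \<beta> k \<in> carrier_mat N N" using Suc by auto
  ultimately show ?case by (metis Epath.simps(2) mult_carrier_mat proj_carrier)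
qed

lemma fault_step:
  assumes hP: "\<forall>i \<in> {1..m}. herm_pauli_op n (P i)"
    and hU: "\<forall>i \<in> {1..m+1}. clifford n (U i)"
    and hb: "\<beta> \<in> sign_vecs m"
    and hQ: "\<forall>j \<in> {1..2*m+1}. pauli_op n (Q j)"
  shows "k \<le> m \<Longrightarrow> \<exists>Q0 \<beta>'. pauli_op n Q0 \<and> \<beta>' \<in> sign_vecs m \<and>
            Efault (2^n) U P Q \<beta> k = Q0 * Epath (2^n) U P \<beta>' k"
proof (induction k)
  case 0 then show ?case using hQ hb by (intro exI[of _ "Q 1"] exI[of _ \<beta>]) auto
next
  case (Suc k)
  then have km: "k < m" by simp
  from Suc.IH km obtain Q0 \<beta>' where Q0: "pauli_op n Q0" and b': "\<beta>' \<in> sign_vecs m"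
    and IH: "Efault (2^n) U P Q \<beta> k = Q0 * Epath (2^n) U P \<beta>' k" by auto
  define N where "N = (2::nat)^n"
  have Pk: "herm_pauli_op n (P (Suc k))" using hP km by auto
  have Uk: "clifford n (U (k+2))" using hU km by auto
  have Q2: "pauli_op n (Q (2*k+2))" and Q3: "pauli_op n (Q (2*k+3))" using hQ km by auto
  from herm_pauli_comm[OF Pk Q0] obtain s where s: "s \<in> {1,-1::int}"
    and PQ: "P (Suc k) * Q0 = of_int s \<cdot>\<^sub>m (Q0 * P (Suc k))" by blast
  have UkU: "unitary_mat N (U (k+2))" using Uk unfolding clifford_def N_def by simp
  have UkC: "U (k+2) \<in> carrier_mat N N" and adj: "mat_adjoint (U (k+2)) * U (k+2) = 1\<^sub>m N"
    using UkU unfolding unitary_mat_def by auto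
  have AdC: "mat_adjoint (U (k+2)) \<in> carrier_mat N N"
    using UkC unfolding mat_adjoint_def by auto
  have PkC: "P (Suc k) \<in> carrier_mat N N" using pauli_carrier[OF herm_pauli[OF Pk]] N_def by simp
  have Q0C: "Q0 \<in> carrier_mat N N" using pauli_carrier[OF Q0] N_def by simp
  have Q2C: "Q (2*k+2) \<in> carrier_mat N N" using pauli_carrier[OF Q2] N_def by simp
  have Q3C: "Q (2*k+3) \<in> carrier_mat N N" using pauli_carrier[OF Q3] N_def by simp
  have EC: "Epath N U P \<beta>' k \<in> carrier_mat N N"
  proof (rule Epath_carrier)
    show "\<forall>i\<in>{1..k+1}. U i \<in> carrier_mat N N"
      using hU km unfolding clifford_def unitary_mat_def N_def by auto
    show "\<forall>i\<in>{1..k}. P i \<in> carrier_mat N N"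
      using hP km pauli_carrier herm_pauli unfolding N_def by fastforce
  qed
  have UQU: "pauli_op n (Q (2*k+3) * (U (k+2) * (Q (2*k+2) * Q0) * mat_adjoint (U (k+2))))"
    using Uk Q2 Q3 Q0 pauli_mult unfolding clifford_def by blast
  define b'' where "b'' = \<beta>'(Suc k := \<beta> (Suc k) * s)"
  have bk: "\<beta> (Suc k) \<in> {-1, 1}" using hb km unfolding sign_vecs_def by auto
  have b'': "b'' \<in> sign_vecs m" using b' bk s km unfolding sign_vecs_def b''_def by auto
  have Econg: "Epath N U P b'' k = Epath N U P \<beta>' k"
    by (rule Epath_cong) (auto simp: b''_def)
  have projc: "proj N (of_int (\<beta> (Suc k))) (P (Suc k)) * Q0 = Q0 * proj N (of_int (b'' (Suc k))) (P (Suc k))"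
    using proj_comm[OF PkC Q0C PQ] by (simp add: b''_def)
  have "Efault N U P Q \<beta> (Suc k) =
    Q (2*k+3) * U (k+2) * Q (2*k+2) * proj N (of_int (\<beta> (Suc k))) (P (Suc k)) * (Q0 * Epath N U P \<beta>' k)"
    using IH N_def by simp
  also have "\<dots> = Q (2*k+3) * (U (k+2) * (Q (2*k+2) * Q0) * mat_adjoint (U (k+2))) *
      (U (k+2) * proj N (of_int (b'' (Suc k))) (P (Suc k)) * Epath N U P \<beta>' k)"
    by (rule chain[OF Q3C UkC Q2C proj_carrier[OF PkC] Q0C EC AdC proj_carrier[OF PkC] projc adj])
  also have "\<dots> = Q (2*k+3) * (U (k+2) * (Q (2*k+2) * Q0) * mat_adjoint (U (k+2))) * Epath N U P b'' (Suc k)"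
    using Econg by simp
  finally show ?case using UQU b'' N_def by blast
qed

theorem mainTheorem10:
  fixes n m :: nat
    and P Ph U :: "nat \<Rightarrow> complex mat"
  assumes hP: "\<forall>i \<in> {1..m}. herm_pauli_op n (P i)"
    and hU: "\<forall>i \<in> {1..m+1}. clifford n (U i)"
    and hidem: "\<forall>\<beta> \<in> sign_vecs m. Epath (2^n) U P \<beta> m * Epath (2^n) U P \<beta> m = Epath (2^n) U P \<beta> m"
    and hcompl: "mat_sum (2^n) (sign_vecs m)
                   (\<lambda>\<beta>. mat_adjoint (Epath (2^n) U P \<beta> m) * Epath (2^n) U P \<beta> m) = 1\<^sub>m (2^n)"
    and hPh: "\<forall>i \<in> {1..m}. herm_pauli_op n (Ph i)"
    and hcomm: "\<forall>i \<in> {1..m}. \<forall>j \<in> {1..m}. Ph i * Ph j = Ph j * Ph i"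
    and hE: "\<forall>\<beta> \<in> sign_vecs m.
               Epath (2^n) U P \<beta> m = proj_prod (2^n) (\<lambda>i. of_int (\<beta> i)) Ph m"
  shows "\<forall>\<beta> \<in> sign_vecs m. \<forall>Q :: nat \<Rightarrow> complex mat.
           (\<forall>j \<in> {1..2*m+1}. pauli_op n (Q j)) \<longrightarrow>
           (\<exists>Q0 \<gamma>. pauli_op n Q0 \<and> (\<forall>i \<in> {1..m}. \<gamma> i \<in> {0::nat, 1}) \<and>
              Efault (2^n) U P Q \<beta> m = Q0 * proj_prod (2^n) (\<lambda>i. (-1) ^ \<gamma> i) Ph m)"
proof (intro ballI allI impI)
  fix \<beta> and Q :: "nat \<Rightarrow> complex mat"
  assume hb: "\<beta> \<in> sign_vecs m" and hQ: "\<forall>j \<in> {1..2*m+1}. pauli_op n (Q j)"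
  obtain Q0 \<beta>' where Q0: "pauli_op n Q0" and b': "\<beta>' \<in> sign_vecs m"
    and e: "Efault (2^n) U P Q \<beta> m = Q0 * Epath (2^n) U P \<beta>' m"
    using fault_step[OF hP hU hb hQ, of m] by auto
  define \<gamma> where "\<gamma> = (\<lambda>i. if \<beta>' i = 1 then 0::nat else 1)"
  have all: "\<beta>' i \<in> {-1, 1}" for i using b' unfolding sign_vecs_def by (cases "i \<in> {1..m}") auto
  have fe: "(\<lambda>i. (-1::complex) ^ \<gamma> i) = (\<lambda>i. of_int (\<beta>' i))"
  proof
    fix i show "(-1::complex) ^ \<gamma> i = of_int (\<beta>' i)" using all[of i] by (auto simp: \<gamma>_def)
  qed
  have "Efault (2^n) U P Q \<beta> m = Q0 * proj_prod (2^n) (\<lambda>i. (-1) ^ \<gamma> i) Ph m"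
    using e hE b' fe by simp
  moreover have "\<forall>i \<in> {1..m}. \<gamma> i \<in> {0::nat, 1}" by (auto simp: \<gamma>_def)
  ultimately show "\<exists>Q0 \<gamma>. pauli_op n Q0 \<and> (\<forall>i \<in> {1..m}. \<gamma> i \<in> {0::nat, 1}) \<and>
              Efault (2^n) U P Q \<beta> m = Q0 * proj_prod (2^n) (\<lambda>i. (-1) ^ \<gamma> i) Ph m"
    using Q0 by blast
qed

end
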